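(* Let $\phi:\mathbb{R}\to\mathbb{R}$ be a convex function and suppose there is a set $I\subseteq[0,1]$ and a strictly increasing function $h:I\to\mathbb{R}$ such that for every $\eta\in[0,1]$ the set $\arg\min_{\alpha\in\mathbb{R}}\{\eta\,\phi(\alpha)+(1-\eta)\phi(-\alpha)\}$ equals $\{h(\eta)\}$ if $\eta\in I$ and is empty if $\eta\notin I$. Then the one-vs-all loss $L^{\mathrm{OVA}}_\phi$ is top-$k$ calibrated for every $1\le k\le m$.
   Context: Classes $\mathcal{Y}=\{1,\dots,m\}$, $m\ge 2$. Top-$k$ error: for $y\in\mathcal{Y}$, $g\in\mathbb{R}^m$, $\mathrm{err}_k(y,g)=1$ if $|\{j\ne y: g_j\ge g_y\}|\ge k$ and $0$ otherwise. A loss $L:\mathcal{Y}\times\mathbb{R}^m\to\mathbb{R}$ is called top-$k$ calibrated if for every probability vector $p\in\mathbb{R}^m$ (playing the role of $(\Pr(Y=y\mid X=x))_y$) whose coordinates are pairwise distinct, $\arg\min_{g\in\mathbb{R}^m}\sum_y p_y L(y,g)\subseteq\arg\min_{g\in\mathbb{R}^m}\sum_y p_y\,\mathrm{err}_k(y,g)$ (the left set may be empty). For a binary margin loss $\phi:\mathbb{R}\to\mathbb{R}$, the one-vs-all (OVA) reduction corresponds to the multiclass loss $L^{\mathrm{OVA}}_\phi(y,g)=\phi(g_y)+\sum_{j\ne y}\phi(-g_j)$ (class $j$ is trained as positive versus all others as negative). *)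

theory Defs
  imports "HOL-Analysis.Analysis"
begin

definition argmin_set :: "('b \<Rightarrow> real) \<Rightarrow> 'b set" where
  "argmin_set f = {x. \<forall>x'. f x \<le> f x'}"

definition err_top :: "nat \<Rightarrow> 'c::finite \<Rightarrow> ('c \<Rightarrow> real) \<Rightarrow> real" where
  "err_top k y g = (if card {j. j \<noteq> y \<and> g j \<ge> g y} \<ge> k then 1 else 0)"

definition ova_loss :: "(real \<Rightarrow> real) \<Rightarrow> 'c::finite \<Rightarrow> ('c \<Rightarrow> real) \<Rightarrow> real" where
  "ova_loss \<phi> y g = \<phi> (g y) + (\<Sum>j\<in>UNIV - {y}. \<phi> (- g j))"

definition prob_vector :: "('c::finite \<Rightarrow> real) \<Rightarrow> bool" where
  "prob_vector p \<longleftrightarrow> (\<forall>y. p y \<ge> 0) \<and> (\<Sum>y\<in>UNIV. p y) = 1"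

definition top_k_calibrated :: "nat \<Rightarrow> ('c::finite \<Rightarrow> ('c \<Rightarrow> real) \<Rightarrow> real) \<Rightarrow> bool" where
  "top_k_calibrated k L \<longleftrightarrow>
     (\<forall>p. prob_vector p \<and> inj p \<longrightarrow>
        argmin_set (\<lambda>g. \<Sum>y\<in>UNIV. p y * L y g)
          \<subseteq> argmin_set (\<lambda>g. \<Sum>y\<in>UNIV. p y * err_top k y g))"

end

theory Submission
  imports Defs
begin

lemma decouple:
  fixes p :: "'c::finite \<Rightarrow> real"
  assumes "prob_vector p"
  shows "(\<Sum>y\<in>UNIV. p y * ova_loss \<phi> y g) = (\<Sum>j\<in>UNIV. p j * \<phi> (g j) + (1 - p j) * \<phi> (- g j))"
proof -
  have s1: "(\<Sum>y\<in>UNIV. p y) = 1" using assms by (simp add: prob_vector_def)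
  have "(\<Sum>y\<in>UNIV. p y * (\<Sum>j\<in>UNIV - {y}. \<phi> (- g j)))
      = (\<Sum>y\<in>UNIV. \<Sum>j\<in>UNIV. (if j \<noteq> y then p y * \<phi> (- g j) else 0))"
    by (simp add: sum_distrib_left sum.If_cases Diff_eq Compl_eq)
  also have "\<dots> = (\<Sum>j\<in>UNIV. \<Sum>y\<in>UNIV. (if j \<noteq> y then p y * \<phi> (- g j) else 0))"
    by (rule sum.swap)
  also have "\<dots> = (\<Sum>j\<in>UNIV. \<phi> (- g j) * (\<Sum>y\<in>UNIV - {j}. p y))"
    by (simp add: sum_distrib_left sum.If_cases Diff_eq Compl_eq mult.commute eq_commute)
  also have "\<dots> = (\<Sum>j\<in>UNIV. (1 - p j) * \<phi> (- g j))"
    by (simp add: sum_diff1 s1 mult.commute)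
  finally have e: "(\<Sum>y\<in>UNIV. p y * (\<Sum>j\<in>UNIV - {y}. \<phi> (- g j))) = (\<Sum>j\<in>UNIV. (1 - p j) * \<phi> (- g j))" .
  show ?thesis unfolding ova_loss_def
    by (simp add: distrib_left sum.distrib e)
qed

lemma coord_min:
  fixes p :: "'c::finite \<Rightarrow> real"
  assumes "g \<in> argmin_set (\<lambda>g. \<Sum>j\<in>UNIV. p j * \<phi> (g j) + (1 - p j) * \<phi> (- g j))"
  shows "g j \<in> argmin_set (\<lambda>\<alpha>. p j * \<phi> \<alpha> + (1 - p j) * \<phi> (- \<alpha>))"
  unfolding argmin_set_def
proof (intro CollectI allI)
  fix a
  define \<psi> where "\<psi> = (\<lambda>i x. p i * \<phi> x + (1 - p i) * \<phi> (- x))"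
  have split: "\<And>f. (\<Sum>i\<in>UNIV. \<psi> i (f i)) = \<psi> j (f j) + (\<Sum>i\<in>UNIV - {j}. \<psi> i (f i))"
    by (simp add: sum.remove)
  have "(\<Sum>i\<in>UNIV. \<psi> i (g i)) \<le> (\<Sum>i\<in>UNIV. \<psi> i ((g(j := a)) i))"
    using assms unfolding argmin_set_def \<psi>_def by blast
  moreover have "(\<Sum>i\<in>UNIV - {j}. \<psi> i ((g(j := a)) i)) = (\<Sum>i\<in>UNIV - {j}. \<psi> i (g i))"
    by (rule sum.cong) auto
  ultimately have "\<psi> j (g j) \<le> \<psi> j a"
    using split[of g] split[of "g(j := a)"] by simp
  then show "p j * \<phi> (g j) + (1 - p j) * \<phi> (- g j) \<le> p j * \<phi> a + (1 - p j) * \<phi> (- a)"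
    by (simp add: \<psi>_def)
qed

lemma card_correct_le:
  fixes g :: "'c::finite \<Rightarrow> real"
  shows "card {y. card {j. j \<noteq> y \<and> g y \<le> g j} < k} \<le> k"
proof (rule ccontr)
  define S where "S = {y. card {j. j \<noteq> y \<and> g y \<le> g j} < k}"
  assume "\<not> card {y. card {j. j \<noteq> y \<and> g y \<le> g j} < k} \<le> k"
  then have ck: "card S > k" by (simp add: S_def)
  then have "S \<noteq> {}" by auto
  have "Min (g ` S) \<in> g ` S" using \<open>S \<noteq> {}\<close> by (intro Min_in) auto
  then obtain y where y: "y \<in> S" "g y = Min (g ` S)" by auto
  have "S - {y} \<subseteq> {j. j \<noteq> y \<and> g y \<le> g j}"
    using y by auto
  then have "card (S - {y}) \<le> card {j. j \<noteq> y \<and> g y \<le> g j}"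
    by (intro card_mono) auto
  moreover have "card (S - {y}) = card S - 1" using y by simp
  moreover have "card {j. j \<noteq> y \<and> g y \<le> g j} < k" using y S_def by auto
  ultimately show False using ck by linarith
qed

lemma err_sum:
  fixes p :: "'c::finite \<Rightarrow> real"
  assumes "prob_vector p"
  shows "(\<Sum>y\<in>UNIV. p y * err_top k y g) = 1 - (\<Sum>y\<in>{y. card {j. j \<noteq> y \<and> g y \<le> g j} < k}. p y)"
proof -
  define C where "C = {y. card {j. j \<noteq> y \<and> g y \<le> g j} < k}"
  have s1: "(\<Sum>y\<in>UNIV. p y) = 1" using assms by (simp add: prob_vector_def)
  have "(\<Sum>y\<in>UNIV. p y * err_top k y g) = (\<Sum>y\<in>UNIV. if y \<in> C then 0 else p y)"
    by (rule sum.cong) (auto simp: err_top_def C_def)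
  also have "\<dots> = (\<Sum>y\<in>UNIV - C. p y)"
    by (simp add: sum.If_cases Diff_eq Compl_eq)
  also have "\<dots> = 1 - (\<Sum>y\<in>C. p y)"
    by (simp add: sum_diff s1)
  finally show ?thesis by (simp add: C_def)
qed

lemma rank_card:
  fixes p :: "'c::finite \<Rightarrow> real"
  assumes inj: "inj p" and k: "k \<le> CARD('c)"
  shows "card {y. card {j. p y < p j} < k} = k"
proof -
  define r where "r = (\<lambda>y. card {j. p y < p j})"
  have rinj: "inj r"
  proof (rule injI, rule ccontr)
    fix y z assume e: "r y = r z" and ne: "y \<noteq> z"
    have lt: "r b < r a" if "p a < p b" for a b
    proof -
      have "insert b {j. p b < p j} \<subseteq> {j. p a < p j}" using that by auto
      then have "card (insert b {j. p b < p j}) \<le> card {j. p a < p j}" by (intro card_mono) auto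
      then show ?thesis by (simp add: r_def)
    qed
    have "p y \<noteq> p z" using inj ne by (meson injD)
    then show False using lt[of y z] lt[of z y] e by (cases "p y < p z") auto
  qed
  have rlt: "r y < CARD('c)" for y
  proof -
    have "{j. p y < p j} \<subseteq> UNIV - {y}" by auto
    then have "r y \<le> card (UNIV - {y} :: 'c set)" unfolding r_def by (intro card_mono) auto
    moreover have c0: "CARD('c) > 0" by simp
    ultimately have "r y \<le> CARD('c) - 1" by (simp add: card_Diff_singleton)
    then show ?thesis using c0 by linarith
  qed
  have "range r \<subseteq> {..<CARD('c)}" using rlt by auto
  moreover have "card (range r) = CARD('c)" using rinj by (simp add: card_image)
  ultimately have rr: "range r = {..<CARD('c)}" by (intro card_subset_eq) auto
  have "r ` {y. r y < k} = {..<k}"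
  proof
    show "r ` {y. r y < k} \<subseteq> {..<k}" by auto
    show "{..<k} \<subseteq> r ` {y. r y < k}"
    proof
      fix x assume "x \<in> {..<k}"
      then have "x \<in> range r" using rr k by auto
      then show "x \<in> r ` {y. r y < k}" using \<open>x \<in> {..<k}\<close> by auto
    qed
  qed
  then have "card {y. r y < k} = k"
    using card_image[OF inj_on_subset[OF rinj subset_UNIV, of "{y. r y < k}"]] by simp
  then show ?thesis by (simp add: r_def)
qed

lemma topk_sum:
  fixes p :: "'c::finite \<Rightarrow> real"
  assumes inj: "inj p" and k: "k \<le> CARD('c)" and nn: "\<And>y. p y \<ge> 0"
    and S: "card S \<le> k"
  shows "(\<Sum>y\<in>S. p y) \<le> (\<Sum>y\<in>{y. card {j. p y < p j} < k}. p y)"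
proof -
  define C where "C = {y. card {j. p y < p j} < k}"
  have cC: "card C = k" using rank_card[OF inj k] by (simp add: C_def)
  have ord: "p d \<le> p c" if "c \<in> C" "d \<notin> C" for c d
  proof (rule ccontr)
    assume "\<not> p d \<le> p c"
    then have "{j. p d < p j} \<subseteq> {j. p c < p j}" by auto
    then have "card {j. p d < p j} \<le> card {j. p c < p j}" by (intro card_mono) auto
    then show False using that by (simp add: C_def)
  qed
  have fin: "finite A" for A :: "'c set" by simp
  have cs: "card S = card (S \<inter> C) + card (S - C)"
    by (metis Diff_Diff_Int Int_commute card_Diff_subset_Int card_Int_Diff fin)
  have cc: "card C = card (S \<inter> C) + card (C - S)"
    by (metis Int_commute card_Int_Diff fin)
  have cle: "card (S - C) \<le> card (C - S)" using cs cc cC S by linarith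
  have sS: "(\<Sum>y\<in>S. p y) = (\<Sum>y\<in>S \<inter> C. p y) + (\<Sum>y\<in>S - C. p y)"
    by (metis fin sum.Int_Diff)
  have sC: "(\<Sum>y\<in>C. p y) = (\<Sum>y\<in>S \<inter> C. p y) + (\<Sum>y\<in>C - S. p y)"
    by (metis Int_commute fin sum.Int_Diff)
  have "(\<Sum>y\<in>S - C. p y) \<le> (\<Sum>y\<in>C - S. p y)"
  proof (cases "S - C = {}")
    case True
    then have "(\<Sum>y\<in>S - C. p y) = 0" by (metis sum.empty)
    then show ?thesis using nn by (simp add: sum_nonneg)
  next
    case False
    define a where "a = Max (p ` (S - C))"
    have "a \<in> p ` (S - C)" unfolding a_def using False by (intro Max_in) auto
    then obtain d where d: "d \<in> S - C" "p d = a" by auto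
    have "(\<Sum>y\<in>S - C. p y) \<le> of_nat (card (S - C)) * a"
      using sum_bounded_above[of "S - C" p a] by (simp add: a_def)
    also have "\<dots> \<le> of_nat (card (C - S)) * a"
      using cle nn[of d] d by (intro mult_right_mono) auto
    also have "\<dots> \<le> (\<Sum>y\<in>C - S. p y)"
      using sum_bounded_below[of "C - S" a p] ord d by auto
    finally show ?thesis .
  qed
  then show ?thesis using sS sC by (simp add: C_def)
qed

theorem lemma2:
  fixes \<phi> :: "real \<Rightarrow> real" and I :: "real set" and h :: "real \<Rightarrow> real"
  assumes "CARD('c::finite) \<ge> 2"
    and "convex_on UNIV \<phi>"
    and "I \<subseteq> {0..1}"
    and "strict_mono_on I h"
    and "\<forall>\<eta>\<in>{0..1}. argmin_set (\<lambda>\<alpha>. \<eta> * \<phi> \<alpha> + (1 - \<eta>) * \<phi> (- \<alpha>))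
                        = (if \<eta> \<in> I then {h \<eta>} else {})"
    and "1 \<le> k" and "k \<le> CARD('c)"
  shows "top_k_calibrated k (ova_loss \<phi> :: 'c \<Rightarrow> ('c \<Rightarrow> real) \<Rightarrow> real)"
  unfolding top_k_calibrated_def
proof (intro allI impI subsetI)
  fix p :: "'c \<Rightarrow> real" and g
  assume pv: "prob_vector p \<and> inj p"
  assume gm: "g \<in> argmin_set (\<lambda>g. \<Sum>y\<in>UNIV. p y * ova_loss \<phi> y g)"
  have nn: "\<And>y. p y \<ge> 0" and s1: "(\<Sum>y\<in>UNIV. p y) = 1" using pv by (auto simp: prob_vector_def)
  have p01: "p j \<in> {0..1}" for j
  proof -
    have "p j \<le> (\<Sum>y\<in>UNIV. p y)" using nn by (intro member_le_sum) auto
    then show ?thesis using nn[of j] s1 by auto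
  qed
  have gm': "g \<in> argmin_set (\<lambda>g. \<Sum>j\<in>UNIV. p j * \<phi> (g j) + (1 - p j) * \<phi> (- g j))"
    using gm decouple[OF conjunct1[OF pv]] by simp
  have gI: "p j \<in> I \<and> g j = h (p j)" for j
  proof -
    have "g j \<in> argmin_set (\<lambda>\<alpha>. p j * \<phi> \<alpha> + (1 - p j) * \<phi> (- \<alpha>))"
      by (rule coord_min[OF gm'])
    then show ?thesis using assms(5) p01[of j] by (auto split: if_splits)
  qed
  have Ceq: "{y. card {j. j \<noteq> y \<and> g y \<le> g j} < k} = {y. card {j. p y < p j} < k}"
  proof -
    have "{j. j \<noteq> y \<and> g y \<le> g j} = {j. p y < p j}" for y
    proof (intro set_eqI iffI)
      fix j assume a: "j \<in> {j. j \<noteq> y \<and> g y \<le> g j}"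
      then have "p j \<noteq> p y" using pv by (auto dest: injD)
      moreover have "\<not> p j < p y"
      proof
        assume "p j < p y"
        then have "h (p j) < h (p y)" using assms(4) gI[of j] gI[of y]
          by (auto simp: strict_mono_on_def)
        then show False using a gI[of j] gI[of y] by auto
      qed
      ultimately show "j \<in> {j. p y < p j}" by auto
    next
      fix j assume a: "j \<in> {j. p y < p j}"
      then have "h (p y) < h (p j)" using assms(4) gI[of j] gI[of y]
          by (auto simp: strict_mono_on_def)
      then show "j \<in> {j. j \<noteq> y \<and> g y \<le> g j}" using a gI[of j] gI[of y] by auto
    qed
    then show ?thesis by simp
  qed
  show "g \<in> argmin_set (\<lambda>g. \<Sum>y\<in>UNIV. p y * err_top k y g)"
    unfolding argmin_set_def
  proof (intro CollectI allI)
    fix g' :: "'c \<Rightarrow> real"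
    have "(\<Sum>y\<in>{y. card {j. j \<noteq> y \<and> g' y \<le> g' j} < k}. p y) \<le> (\<Sum>y\<in>{y. card {j. p y < p j} < k}. p y)"
      using pv nn assms(7) card_correct_le[of g' k] by (intro topk_sum) auto
    then show "(\<Sum>y\<in>UNIV. p y * err_top k y g) \<le> (\<Sum>y\<in>UNIV. p y * err_top k y g')"
      using err_sum[OF conjunct1[OF pv], of k g] err_sum[OF conjunct1[OF pv], of k g'] Ceq by simp
  qed
qed

end
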